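(* Let $n\ge3$. If $W\in G^{\mathbb{R}}(2,\mathbb{C}^n)$ is not a complex line, then the orbit $\mathrm{U}(n)\cdot W$ has the transitivity property.
   Context: $G^{\mathbb{R}}(2,\mathbb{C}^n)$ is the Grassmannian of real $2$-planes in $\mathbb{C}^n=\mathbb{R}^{2n}$. A set $\mathbb{G}$ of real planes has the transitivity property if for any two vectors $x,y\in\mathbb{C}^n$ there exist $W_1,\dots,W_k\in\mathbb{G}$ with $x\in W_1$, $y\in W_k$ and $\dim_{\mathbb{R}}(W_i\cap W_{i+1})>0$ for $i=1,\dots,k-1$. *)

theory Defs
  imports "HOL-Analysis.Analysis"
begin

text \<open>C^n is modelled as complex ^ 'n with CARD('n) = n. Real subspaces and real
dimension are HOL-Analysis' subspace/dim (scalars = real).\<close>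

definition real_grassmannian2 :: "(complex ^ 'n) set set" where
  "real_grassmannian2 = {W. subspace W \<and> dim W = 2}"

definition complex_line :: "(complex ^ 'n) set \<Rightarrow> bool" where
  "complex_line W \<longleftrightarrow> (\<exists>v. v \<noteq> 0 \<and> W = {c *s v | c. True})"

definition cmat_adjoint :: "complex ^ 'n ^ 'n \<Rightarrow> complex ^ 'n ^ 'n" where
  "cmat_adjoint U = (\<chi> i j. cnj (U $ j $ i))"

definition unitary_mat :: "complex ^ 'n ^ 'n \<Rightarrow> bool" where
  "unitary_mat U \<longleftrightarrow> cmat_adjoint U ** U = mat 1"

definition unitary_orbit :: "(complex ^ 'n) set \<Rightarrow> (complex ^ 'n) set set" where
  "unitary_orbit W = {(\<lambda>x. U *v x) ` W | U. unitary_mat U}"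

definition transitivity_property :: "(complex ^ 'n) set set \<Rightarrow> bool" where
  "transitivity_property G \<longleftrightarrow>
     (\<forall>x y. \<exists>Ws. Ws \<noteq> [] \<and> set Ws \<subseteq> G \<and> x \<in> hd Ws \<and> y \<in> last Ws \<and>
        (\<forall>i. Suc i < length Ws \<longrightarrow> dim (Ws ! i \<inter> Ws ! Suc i) > 0))"

end

theory Submission
  imports Defs
begin


definition cinner :: "complex^'n \<Rightarrow> complex^'n \<Rightarrow> complex" where
  "cinner x y = (\<Sum>i\<in>UNIV. x$i * cnj (y$i))"

lemma cinner_add_left: "cinner (x + y) z = cinner x z + cinner y z"
  by (simp add: cinner_def algebra_simps sum.distrib)
lemma cinner_add_right: "cinner z (x + y) = cinner z x + cinner z y"
  by (simp add: cinner_def algebra_simps sum.distrib)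
lemma cinner_diff_left: "cinner (x - y) z = cinner x z - cinner y z"
  by (simp add: cinner_def algebra_simps sum_subtractf)
lemma cinner_diff_right: "cinner z (x - y) = cinner z x - cinner z y"
  by (simp add: cinner_def algebra_simps sum_subtractf)
lemma cinner_scale_left: "cinner (c *s x) z = c * cinner x z"
  by (simp add: cinner_def sum_distrib_left mult.assoc)
lemma cinner_scale_right: "cinner z (c *s x) = cnj c * cinner z x"
  by (simp add: cinner_def sum_distrib_left algebra_simps)
lemma scaleR_as_scale: "r *\<^sub>R (x::complex^'n) = (complex_of_real r) *s x"
  unfolding vec_eq_iff by (simp add: scaleR_conv_of_real[where 'a=complex])
lemma csq: "(complex_of_real (cmod z))^2 = z * cnj z"
  by (metis complex_norm_square of_real_power)
lemma cinner_scaleR_left: "cinner (r *\<^sub>R x) z = of_real r * cinner x z"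
  by (simp add: scaleR_as_scale cinner_scale_left)
lemma cinner_scaleR_right: "cinner z (r *\<^sub>R x) = of_real r * cinner z x"
  by (simp add: scaleR_as_scale cinner_scale_right)
lemma cinner_cnj: "cnj (cinner x y) = cinner y x"
  by (simp add: cinner_def mult.commute)
lemma cinner_zero_left[simp]: "cinner 0 x = 0" and cinner_zero_right[simp]: "cinner x 0 = 0"
  by (simp_all add: cinner_def)
lemma cinner_self: "cinner x x = of_real ((norm x)^2)"
proof -
  have "(norm x)^2 = (\<Sum>i\<in>UNIV. (norm (x$i))^2)"
    by (simp add: norm_vec_def L2_set_def sum_nonneg)
  hence "of_real ((norm x)^2) = (\<Sum>i\<in>UNIV. of_real ((norm (x$i))^2) :: complex)" by simp
  also have "\<dots> = cinner x x" by (simp add: cinner_def csq)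
  finally show ?thesis by simp
qed
lemma cinner_orth_sym: "cinner x y = 0 \<longleftrightarrow> cinner y x = 0"
  by (metis cinner_cnj complex_cnj_zero_iff)

lemma mv_add: "(U::complex^'n^'m) *v (x + y) = U *v x + U *v y"
  by (simp add: matrix_vector_mult_def vec_eq_iff algebra_simps sum.distrib)
lemma mv_scale: "(U::complex^'n^'m) *v (c *s x) = c *s (U *v x)"
  by (simp add: matrix_vector_mult_def vec_eq_iff sum_distrib_left algebra_simps)
lemma mv_scaleR: "(U::complex^'n^'m) *v (r *\<^sub>R x) = r *\<^sub>R (U *v x)"
  by (simp add: scaleR_as_scale mv_scale)
lemma mv_zero: "(U::complex^'n^'m) *v 0 = 0"
  by (simp add: matrix_vector_mult_def vec_eq_iff)

lemma cinner_mv: "cinner (U *v x) (U *v y) = cinner x y" if "unitary_mat (U::complex^'n^'n)"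
proof -
  have I: "(\<Sum>i\<in>UNIV. cnj (U$i$k) * U$i$j) = (if k = j then 1 else 0)" for k j
  proof -
    have "(cmat_adjoint U ** U) $ k $ j = (if k = j then 1 else 0)"
      using that by (simp add: unitary_mat_def mat_def)
    thus ?thesis by (simp add: matrix_matrix_mult_def cmat_adjoint_def)
  qed
  have "cinner (U *v x) (U *v y) = (\<Sum>i\<in>UNIV. (\<Sum>j\<in>UNIV. U$i$j * x$j) * cnj (\<Sum>k\<in>UNIV. U$i$k * y$k))"
    by (simp add: cinner_def matrix_vector_mult_def)
  also have "\<dots> = (\<Sum>i\<in>UNIV. \<Sum>k\<in>UNIV. \<Sum>j\<in>UNIV. (x$j * cnj (y$k)) * (cnj (U$i$k) * U$i$j))"
    by (simp add: sum_distrib_left sum_distrib_right algebra_simps)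
  also have "\<dots> = (\<Sum>k\<in>UNIV. \<Sum>j\<in>UNIV. (x$j * cnj (y$k)) * (\<Sum>i\<in>UNIV. cnj (U$i$k) * U$i$j))"
  proof -
    have "(\<Sum>i\<in>UNIV. \<Sum>k\<in>UNIV. \<Sum>j\<in>UNIV. (x$j * cnj (y$k)) * (cnj (U$i$k) * U$i$j))
       = (\<Sum>k\<in>UNIV. \<Sum>i\<in>UNIV. \<Sum>j\<in>UNIV. (x$j * cnj (y$k)) * (cnj (U$i$k) * U$i$j))"
      by (rule sum.swap)
    also have "\<dots> = (\<Sum>k\<in>UNIV. \<Sum>j\<in>UNIV. \<Sum>i\<in>UNIV. (x$j * cnj (y$k)) * (cnj (U$i$k) * U$i$j))"
      by (rule sum.cong[OF refl], rule sum.swap)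
    finally show ?thesis by (simp add: sum_distrib_left)
  qed
  also have "\<dots> = cinner x y"
    by (simp add: I cinner_def if_distrib sum.delta cong: if_cong)
  finally show ?thesis .
qed

lemma norm_mv: "unitary_mat U \<Longrightarrow> norm (U *v x) = norm x"
  using cinner_mv[of U x x] by (simp add: cinner_self del: of_real_power)

lemma adjoint_mult: "cmat_adjoint ((A::complex^'n^'n) ** B) = cmat_adjoint B ** cmat_adjoint A"
  by (simp add: cmat_adjoint_def matrix_matrix_mult_def vec_eq_iff mult.commute)

lemma unitary_mult: "unitary_mat U \<Longrightarrow> unitary_mat V \<Longrightarrow> unitary_mat ((U::complex^'n^'n) ** V)"
  unfolding unitary_mat_def adjoint_mult
  by (metis matrix_mul_assoc matrix_mul_lid)

lemma unitary_one: "unitary_mat (mat 1 :: complex^'n^'n)"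
proof -
  have "cmat_adjoint (mat 1 :: complex^'n^'n) = mat 1"
    by (simp add: cmat_adjoint_def mat_def vec_eq_iff)
  thus ?thesis by (simp add: unitary_mat_def)
qed

definition Emat :: "complex^'n \<Rightarrow> complex \<Rightarrow> complex^'n^'n" where
  "Emat u c = (\<chi> i j. (if i = j then 1 else 0) + c * u$i * cnj (u$j))"

lemma Emat_apply: "Emat u c *v z = z + (c * cinner z u) *s u"
proof (subst vec_eq_iff, rule allI)
  fix i
  have "(Emat u c *v z) $ i = (\<Sum>j\<in>UNIV. (if i = j then 1 else 0) * z$j + c * u$i * cnj (u$j) * z$j)"
    by (simp add: Emat_def matrix_vector_mult_def distrib_right)
  also have "\<dots> = (\<Sum>j\<in>UNIV. (if i = j then z$j else 0)) + (\<Sum>j\<in>UNIV. c * u$i * cnj (u$j) * z$j)"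
  proof -
    have "(\<Sum>j\<in>UNIV. (if i = j then 1 else 0) * z$j) = (\<Sum>j\<in>UNIV. (if i = j then z$j else 0))"
      by (rule sum.cong) auto
    thus ?thesis by (simp add: sum.distrib)
  qed
  also have "\<dots> = z$i + (c * cinner z u) * u$i"
    by (simp add: cinner_def sum_distrib_left sum_distrib_right algebra_simps)
  finally show "(Emat u c *v z) $ i = (z + (c * cinner z u) *s u) $ i" by simp
qed

lemma unitary_Emat:
  assumes "2 * Re c + (cmod c)^2 * (norm u)^2 = 0"
  shows "unitary_mat (Emat u c)"
proof -
  have "(cmat_adjoint (Emat u c) ** Emat u c) $ k $ j = mat 1 $ k $ j" for k j
  proof -
    let ?d = "\<lambda>i j. (if i = j then 1 else 0::complex)"
    have "(cmat_adjoint (Emat u c) ** Emat u c) $ k $ j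
       = (\<Sum>i\<in>UNIV. (?d i k + cnj c * cnj (u$i) * u$k) * (?d i j + c * u$i * cnj (u$j)))"
      by (simp add: matrix_matrix_mult_def cmat_adjoint_def Emat_def if_distrib[of cnj] cong: if_cong)
    also have "\<dots> = (\<Sum>i\<in>UNIV. ?d i k * ?d i j) + (\<Sum>i\<in>UNIV. ?d i k * (c * u$i * cnj (u$j)))
        + (\<Sum>i\<in>UNIV. ?d i j * (cnj c * cnj (u$i) * u$k))
        + (\<Sum>i\<in>UNIV. (cnj c * c * u$k * cnj (u$j)) * (u$i * cnj (u$i)))"
      by (simp add: sum.distrib algebra_simps)
    also have "\<dots> = ?d k j + c * u$k * cnj (u$j) + cnj c * cnj (u$j) * u$k
        + (cnj c * c * u$k * cnj (u$j)) * cinner u u"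
    proof -
      have 1: "(\<Sum>i\<in>UNIV. ?d i k * ?d i j) = ?d k j"
        by (simp add: if_distrib[of "\<lambda>x. x * _"] cong: if_cong)
      have 2: "(\<Sum>i\<in>UNIV. ?d i k * (c * u$i * cnj (u$j))) = c * u$k * cnj (u$j)"
        by (simp add: if_distrib[of "\<lambda>x. x * _"] cong: if_cong)
      have 3: "(\<Sum>i\<in>UNIV. ?d i j * (cnj c * cnj (u$i) * u$k)) = cnj c * cnj (u$j) * u$k"
        by (simp add: if_distrib[of "\<lambda>x. x * _"] cong: if_cong)
      have 4: "(\<Sum>i\<in>UNIV. (cnj c * c * u$k * cnj (u$j)) * (u$i * cnj (u$i)))
          = (cnj c * c * u$k * cnj (u$j)) * cinner u u"
        by (simp add: cinner_def sum_distrib_left)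
      show ?thesis using 1 2 3 4 by simp
    qed
    also have "\<dots> = ?d k j + u$k * cnj (u$j) * (c + cnj c + cnj c * c * cinner u u)"
      by (simp add: algebra_simps)
    also have "c + cnj c + cnj c * c * cinner u u = of_real (2 * Re c + (cmod c)^2 * (norm u)^2)"
    proof -
      have "c + cnj c = of_real (2 * Re c)" by (simp add: complex_add_cnj)
      moreover have "cnj c * c = of_real ((cmod c)^2)" by (simp add: csq mult.commute)
      ultimately show ?thesis by (simp add: cinner_self)
    qed
    finally show ?thesis using assms by (simp add: mat_def)
  qed
  thus ?thesis unfolding unitary_mat_def by (simp add: vec_eq_iff)
qed

lemma cinner_self_eq0: "cinner x x = 0 \<longleftrightarrow> x = 0"
  by (simp add: cinner_self)

lemma Emat_fix: "cinner z u = 0 \<Longrightarrow> Emat u c *v z = z"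
  by (simp add: Emat_apply)

lemma M0:
  fixes u w :: "complex^'n"
  assumes "norm u = norm w"
  shows "\<exists>U. unitary_mat U \<and> U *v u = w \<and> (\<forall>z. cinner z u = 0 \<and> cinner z w = 0 \<longrightarrow> U *v z = z)"
proof (cases "u = 0")
  case True
  then have "w = 0" using assms by simp
  then show ?thesis using True unitary_one by (intro exI[of _ "mat 1"]) auto
next
  case False
  define N where "N = cinner u u"
  have N: "N = of_real ((norm u)^2)" "N \<noteq> 0" using False by (simp_all add: N_def cinner_self)
  have Nw: "cinner w w = N" using assms by (simp add: N cinner_self)
  define p where "p = cinner w u"
  define \<phi> where "\<phi> = (if p = 0 then 1 else p / of_real (cmod p))"
  have phi1: "cmod \<phi> = 1" by (simp add: \<phi>_def norm_divide)
  have phir: "\<phi> * cnj p = of_real (cmod p)"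
  proof (cases "p = 0")
    case False
    have "p * cnj p = of_real (cmod p) * of_real (cmod p)" by (simp add: csq[symmetric] power2_eq_square)
    thus ?thesis using False by (simp add: \<phi>_def field_simps)
  qed (simp add: \<phi>_def)
  define c1 where "c1 = (\<phi> - 1) / N"
  define E1 where "E1 = Emat u c1"
  have uE1: "unitary_mat E1"
    unfolding E1_def
  proof (rule unitary_Emat)
    have "cmod (\<phi> - 1) ^ 2 = (cmod \<phi>)^2 - 2 * Re \<phi> + 1"
      unfolding cmod_power2 by (simp add: power2_eq_square algebra_simps)
    hence h: "2 * Re (\<phi> - 1) + (cmod (\<phi> - 1))^2 = 0" using phi1 by simp
    define L where "L = (norm u)^2"
    have L: "L > 0" using False by (simp add: L_def)
    have "c1 = (\<phi> - 1) / of_real L" by (simp add: c1_def N L_def)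
    hence e1: "Re (\<phi> - 1) = L * Re c1" and e2: "cmod (\<phi> - 1) = L * cmod c1"
      using L by (simp_all add: norm_divide)
    have "L * (2 * Re c1 + (cmod c1)\<^sup>2 * L) = 2 * Re (\<phi> - 1) + (cmod (\<phi> - 1))^2"
      unfolding e1 e2 by (simp add: algebra_simps power2_eq_square)
    hence "L * (2 * Re c1 + (cmod c1)\<^sup>2 * L) = 0" using h by simp
    thus "2 * Re c1 + (cmod c1)\<^sup>2 * (norm u)\<^sup>2 = 0"
      unfolding L_def[symmetric] using L by simp
  qed
  have E1u: "E1 *v u = \<phi> *s u"
    using N(2) by (simp add: E1_def Emat_apply c1_def N_def[symmetric] vec_eq_iff field_simps)
  have E1z: "E1 *v z = z" if "cinner z u = 0" for z
    using that by (simp add: E1_def Emat_fix)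
  define u1 where "u1 = \<phi> *s u"
  define d where "d = u1 - w"
  have pp: "cnj \<phi> * \<phi> = 1" using csq[of \<phi>] phi1 by (simp add: mult.commute)
  have cu1u1: "cinner u1 u1 = N"
    using pp by (simp add: u1_def cinner_scale_left cinner_scale_right N_def mult.assoc[symmetric])
  have cu1w: "cinner u1 w = of_real (cmod p)"
  proof -
    have "cinner u w = cnj p" by (simp add: p_def cinner_cnj)
    thus ?thesis by (simp add: u1_def cinner_scale_left phir)
  qed
  have cwu1: "cinner w u1 = of_real (cmod p)"
    using cu1w by (metis cinner_cnj complex_cnj_complex_of_real)
  have cu1d: "cinner u1 d = N - of_real (cmod p)"
    by (simp add: d_def cinner_diff_right cu1u1 cu1w)
  have cdd: "cinner d d = 2 * (N - of_real (cmod p))"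
    by (simp add: d_def cinner_diff_right cinner_diff_left cu1u1 cu1w cwu1 Nw)
  show ?thesis
  proof (cases "d = 0")
    case True
    then have "E1 *v u = w" by (simp add: E1u d_def u1_def)
    then show ?thesis using uE1 E1z by blast
  next
    case dne: False
    define E2 where "E2 = Emat d (-2 / cinner d d)"
    have cdd0: "cinner d d \<noteq> 0" using dne by (simp add: cinner_self_eq0)
    have uE2: "unitary_mat E2"
      unfolding E2_def
    proof (rule unitary_Emat)
      have "cinner d d = of_real ((norm d)^2)" by (simp add: cinner_self)
      moreover have "norm d \<noteq> 0" using dne by simp
      ultimately show "2 * Re (- 2 / cinner d d) + (cmod (- 2 / cinner d d))\<^sup>2 * (norm d)\<^sup>2 = 0"
        by (simp add: norm_divide power_divide field_simps del: of_real_power)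
    qed
    have "E2 *v u1 = u1 + (-2 / cinner d d * cinner u1 d) *s d"
      by (simp add: E2_def Emat_apply)
    also have "-2 / cinner d d * cinner u1 d = -1"
      using cdd0 by (simp add: cdd cu1d field_simps)
    finally have E2u1: "E2 *v u1 = w" by (simp add: d_def)
    have E2z: "E2 *v z = z" if "cinner z u = 0" "cinner z w = 0" for z
    proof -
      have "cinner z d = 0" using that by (simp add: d_def u1_def cinner_diff_right cinner_scale_right)
      thus ?thesis by (simp add: E2_def Emat_fix)
    qed
    have "unitary_mat (E2 ** E1)" using uE1 uE2 by (simp add: unitary_mult)
    moreover have "(E2 ** E1) *v u = w"
      by (simp add: matrix_vector_mul_assoc[symmetric] E1u u1_def[symmetric] E2u1)
    moreover have "\<forall>z. cinner z u = 0 \<and> cinner z w = 0 \<longrightarrow> (E2 ** E1) *v z = z"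
      by (simp add: matrix_vector_mul_assoc[symmetric] E1z E2z)
    ultimately show ?thesis by blast
  qed
qed



definition chain :: "(complex^'n) set list \<Rightarrow> bool" where
  "chain Ws \<longleftrightarrow> (\<forall>i. Suc i < length Ws \<longrightarrow> dim (Ws ! i \<inter> Ws ! Suc i) > 0)"

definition reach :: "(complex^'n) set set \<Rightarrow> complex^'n \<Rightarrow> complex^'n \<Rightarrow> bool" where
  "reach G x y \<longleftrightarrow> (\<exists>Ws. Ws \<noteq> [] \<and> set Ws \<subseteq> G \<and> x \<in> hd Ws \<and> y \<in> last Ws \<and> chain Ws)"

lemma tp_reach: "transitivity_property G \<longleftrightarrow> (\<forall>x y. reach G x y)"
  by (simp add: transitivity_property_def reach_def chain_def)

lemma dim_pos: "(v::complex^'n) \<in> S \<Longrightarrow> v \<noteq> 0 \<Longrightarrow> dim S > 0"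
proof (rule ccontr)
  assume "v \<in> S" "v \<noteq> 0" "\<not> dim S > 0"
  then have "dim S = 0" by simp
  then have "S \<subseteq> {0}" using dim_eq_0 by blast
  then show False using \<open>v \<in> S\<close> \<open>v \<noteq> 0\<close> by auto
qed

lemma chain_append:
  assumes "chain A" "chain B" "A \<noteq> []" "B \<noteq> []" "dim (last A \<inter> hd B) > 0"
  shows "chain (A @ B)"
  unfolding chain_def
proof (intro allI impI)
  fix i assume i: "Suc i < length (A @ B)"
  consider "Suc i < length A" | "Suc i = length A" | "Suc i > length A" by linarith
  then show "dim ((A @ B) ! i \<inter> (A @ B) ! Suc i) > 0"
  proof cases
    case 1 then show ?thesis using assms(1) by (simp add: chain_def nth_append)
  next
    case 2
    then have ii: "i = length A - 1" by simp
    then have "(A @ B) ! i = last A" "(A @ B) ! Suc i = hd B"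
      using assms(3,4) 2 by (auto simp: nth_append last_conv_nth hd_conv_nth)
    then show ?thesis using assms(5) by simp
  next
    case 3
    then have "(A @ B) ! i = B ! (i - length A)" "(A @ B) ! Suc i = B ! Suc (i - length A)"
      by (auto simp: nth_append Suc_diff_le)
    moreover have "Suc (i - length A) < length B" using i 3 by auto
    ultimately show ?thesis using assms(2) by (simp add: chain_def)
  qed
qed

lemma chain_rev: "chain A \<Longrightarrow> chain (rev A)"
  unfolding chain_def
proof (intro allI impI)
  fix i assume c: "\<forall>i. Suc i < length A \<longrightarrow> 0 < dim (A ! i \<inter> A ! Suc i)"
    and i: "Suc i < length (rev A)"
  define j where "j = length A - Suc (Suc i)"
  have j: "Suc j < length A" using i by (simp add: j_def)
  have "rev A ! i = A ! Suc j" "rev A ! Suc i = A ! j"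
    using i by (auto simp: rev_nth j_def Suc_diff_Suc)
  then show "0 < dim (rev A ! i \<inter> rev A ! Suc i)"
    using c j by (simp add: Int_commute)
qed

lemma reach_single: "P \<in> G \<Longrightarrow> x \<in> P \<Longrightarrow> y \<in> P \<Longrightarrow> reach G x y"
  unfolding reach_def by (intro exI[of _ "[P]"]) (simp add: chain_def)

lemma reach_trans:
  assumes "reach G x y" "reach G y z" "y \<noteq> 0"
  shows "reach G x z"
proof -
  obtain A where A: "A \<noteq> []" "set A \<subseteq> G" "x \<in> hd A" "y \<in> last A" "chain A"
    using assms(1) by (auto simp: reach_def)
  obtain B where B: "B \<noteq> []" "set B \<subseteq> G" "y \<in> hd B" "z \<in> last B" "chain B"
    using assms(2) by (auto simp: reach_def)
  have "chain (A @ B)" using A B assms(3) by (intro chain_append) (auto intro: dim_pos)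
  then show ?thesis using A B unfolding reach_def by (intro exI[of _ "A @ B"]) auto
qed

lemma reach_sym: "reach G x y \<Longrightarrow> reach G y x"
  unfolding reach_def
  by (metis chain_rev hd_rev last_rev rev_is_Nil_conv set_rev)

lemma orth_exists:
  fixes x y :: "complex^'n"
  assumes "CARD('n) \<ge> 3"
  shows "\<exists>f. f \<noteq> 0 \<and> cinner f x = 0 \<and> cinner f y = 0"
proof -
  define F :: "complex^'n \<Rightarrow> complex^2" where
    "F = (\<lambda>f. \<chi> i. if i = 1 then cinner f x else cinner f y)"
  have lin: "linear F"
    by (rule linearI) (simp_all add: F_def vec_eq_iff cinner_add_left cinner_scaleR_left scaleR_conv_of_real[where 'a=complex])
  have "\<not> inj F"
  proof
    assume "inj F"
    then have "dim (F ` UNIV) = dim (UNIV :: (complex^'n) set)"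
      using lin by (intro dim_image_eq) (auto intro: inj_on_subset)
    moreover have "dim (F ` UNIV) \<le> dim (UNIV :: (complex^2) set)" by (rule dim_subset) simp
    ultimately show False using assms by (simp add: dim_UNIV)
  qed
  then obtain f1 f2 where "f1 \<noteq> f2" "F f1 = F f2" unfolding inj_def by blast
  then have "f1 - f2 \<noteq> 0" "F (f1 - f2) = 0" using linear_diff[OF lin] by auto
  moreover have "F (f1 - f2) $ 1 = cinner (f1 - f2) x" "F (f1 - f2) $ 2 = cinner (f1 - f2) y"
    by (simp_all add: F_def)
  ultimately show ?thesis by (intro exI[of _ "f1 - f2"]) auto
qed



lemma proj:
  fixes y z :: "complex^'n"
  assumes "z \<noteq> 0"
  defines "c \<equiv> cinner y z / of_real ((norm z)^2)"
  shows "cinner (y - c *s z) z = 0" "y = c *s z + (y - c *s z)"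
    "(norm (y - c *s z))^2 * (norm z)^2 = (norm y)^2 * (norm z)^2 - (cmod (cinner y z))^2"
    "Im c * (norm z)^2 = Im (cinner y z)" "cmod c * (norm z)^2 = cmod (cinner y z)"
proof -
  have nz: "norm z \<noteq> 0" using assms by simp
  have czz: "cinner z z = of_real ((norm z)^2)" by (simp add: cinner_self)
  show 1: "cinner (y - c *s z) z = 0"
    using nz by (simp add: cinner_diff_left cinner_scale_left czz c_def del: of_real_power)
  show "y = c *s z + (y - c *s z)" by simp
  have "cinner (y - c *s z) (y - c *s z) = cinner (y - c *s z) y"
    using 1 by (simp add: cinner_diff_right cinner_scale_right)
  also have "\<dots> = cinner y y - c * cnj (cinner y z)"
    by (simp add: cinner_diff_left cinner_scale_left cinner_cnj)
  finally have "of_real ((norm (y - c *s z))^2) = of_real ((norm y)^2) - cinner y z * cnj (cinner y z) / of_real ((norm z)^2)"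
    by (simp add: cinner_self c_def del: of_real_power)
  also have "\<dots> = of_real ((norm y)^2 - (cmod (cinner y z))^2 / (norm z)^2)"
    by (simp only: csq[symmetric]) simp
  finally have "(norm (y - c *s z))^2 = (norm y)^2 - (cmod (cinner y z))^2 / (norm z)^2"
    using of_real_eq_iff by blast
  then show "(norm (y - c *s z))^2 * (norm z)^2 = (norm y)^2 * (norm z)^2 - (cmod (cinner y z))^2"
    using nz by (simp add: field_simps)
  show "Im c * (norm z)^2 = Im (cinner y z)" using nz
    by (simp add: c_def del: of_real_power)
  show "cmod c * (norm z)^2 = cmod (cinner y z)" using nz
    by (simp add: c_def norm_divide del: of_real_power)
qed

lemma norm_scale: "norm (c *s (x::complex^'n)) = cmod c * norm x"
proof -
  have "of_real ((norm (c *s x))^2) = cinner (c *s x) (c *s x)" by (simp add: cinner_self)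
  also have "\<dots> = (c * cnj c) * cinner x x" by (simp add: cinner_scale_left cinner_scale_right algebra_simps)
  also have "\<dots> = of_real ((cmod c * norm x)^2)" by (simp add: csq[symmetric] cinner_self power_mult_distrib)
  finally have "(norm (c *s x))^2 = (cmod c * norm x)^2" using of_real_eq_iff by blast
  thus ?thesis by (simp add: power2_eq_iff_nonneg)
qed

locale setupW =
  fixes W :: "(complex^'n) set" and a e :: "complex^'n" and lam :: complex
  assumes n3: "CARD('n) \<ge> 3" and sub: "subspace W" and aW: "a \<in> W" and bW: "lam *s a + e \<in> W"
    and a0: "a \<noteq> 0" and e0: "e \<noteq> 0" and ae: "cinner e a = 0"
begin

definition kap where "kap = Im lam * norm a / norm e"

lemma orbit_zero: "P \<in> unitary_orbit W \<Longrightarrow> 0 \<in> P"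
  using sub by (auto simp: unitary_orbit_def mv_zero subspace_0 image_iff intro!: bexI[of _ 0])

lemma plane:
  assumes "norm x = norm a" "norm f = norm e" "cinner f x = 0"
  shows "\<exists>P\<in>unitary_orbit W. \<forall>\<alpha> \<beta>. \<alpha> *\<^sub>R x + \<beta> *\<^sub>R (lam *s x + f) \<in> P"
proof -
  obtain U1 where U1: "unitary_mat U1" "U1 *v a = x"
    using M0[of a x] assms(1) by auto
  define e1 where "e1 = U1 *v e"
  have ne1: "norm e1 = norm f" using assms(2) U1 by (simp add: e1_def norm_mv)
  have e1x: "cinner x e1 = 0"
    using cinner_mv[OF U1(1), of e a] ae by (simp add: e1_def U1(2)[symmetric] cinner_orth_sym)
  obtain U2 where U2: "unitary_mat U2" "U2 *v e1 = f" "\<forall>z. cinner z e1 = 0 \<and> cinner z f = 0 \<longrightarrow> U2 *v z = z"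
    using M0[OF ne1] by auto
  have U2x: "U2 *v x = x" using U2(3) e1x assms(3) cinner_orth_sym by blast
  define U where "U = U2 ** U1"
  have uU: "unitary_mat U" using U1 U2 by (simp add: U_def unitary_mult)
  have Ua: "U *v a = x" using U1 U2x by (simp add: U_def matrix_vector_mul_assoc[symmetric])
  have Ue: "U *v e = f" using U2 by (simp add: U_def matrix_vector_mul_assoc[symmetric] e1_def[symmetric])
  define P where "P = (\<lambda>v. U *v v) ` W"
  have "P \<in> unitary_orbit W" using uU by (auto simp: unitary_orbit_def P_def)
  moreover have "\<alpha> *\<^sub>R x + \<beta> *\<^sub>R (lam *s x + f) \<in> P" for \<alpha> \<beta>
  proof -
    have "\<alpha> *\<^sub>R a + \<beta> *\<^sub>R (lam *s a + e) \<in> W"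
      using subspace_add[OF sub subspace_scale[OF sub aW] subspace_scale[OF sub bW]] by simp
    moreover have "U *v (\<alpha> *\<^sub>R a + \<beta> *\<^sub>R (lam *s a + e)) = \<alpha> *\<^sub>R x + \<beta> *\<^sub>R (lam *s x + f)"
      by (simp add: mv_add mv_scaleR mv_scale Ua Ue)
    ultimately show ?thesis unfolding P_def by (metis image_eqI)
  qed
  ultimately show ?thesis by blast
qed

lemma N:
  assumes z0: "z \<noteq> 0" and vz: "cinner v z = 0" and cond: "\<bar>Im c\<bar> * norm z = \<bar>kap\<bar> * norm v"
  shows "reach (unitary_orbit W) z (c *s z + v)"
proof -
  have na: "norm a > 0" using a0 by simp
  have ne: "norm e > 0" using e0 by simp
  have nz: "norm z > 0" using z0 by simp
  define x where "x = (norm a / norm z) *\<^sub>R z"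
  have nx: "norm x = norm a" using na nz by (simp add: x_def)
  have zx: "z = (norm z / norm a) *\<^sub>R x" using na nz by (simp add: x_def)
  show ?thesis
  proof (cases "v = 0")
    case True
    then have Ic: "Im c = 0" using cond nz by simp
    obtain f0 where f0: "f0 \<noteq> 0" "cinner f0 x = 0" using orth_exists[OF n3, of x x] by auto
    define f where "f = (norm e / norm f0) *\<^sub>R f0"
    have "norm f = norm e" using f0 ne by (simp add: f_def)
    moreover have "cinner f x = 0" using f0 by (simp add: f_def cinner_scaleR_left)
    ultimately obtain P where P: "P \<in> unitary_orbit W" "\<And>\<alpha> \<beta>. \<alpha> *\<^sub>R x + \<beta> *\<^sub>R (lam *s x + f) \<in> P"
      using plane nx by blast
    have "z \<in> P" using P(2)[of "norm z / norm a" 0] zx by simp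
    moreover have "c *s z + v \<in> P"
    proof -
      have "c = of_real (Re c)" using Ic by (simp add: complex_eq_iff)
      hence "c *s z + v = (Re c * (norm z / norm a)) *\<^sub>R x + 0 *\<^sub>R (lam *s x + f)"
        using True by (subst zx) (simp add: scaleR_as_scale vec_eq_iff)
      thus ?thesis using P(2) by metis
    qed
    ultimately show ?thesis using P(1) by (rule reach_single[rotated])
  next
    case False
    then have nv: "norm v > 0" by simp
    define s :: real where "s = (if Im c * kap < 0 then -1 else 1)"
    have s2: "s * s = 1" by (simp add: s_def)
    have sc: "Im c * norm z = s * kap * norm v"
    proof -
      have sq: "(Im c * norm z)^2 = (kap * norm v)^2"
        using cond by (metis abs_mult power2_abs abs_of_pos nz nv)
      hence o: "Im c * norm z = kap * norm v \<or> Im c * norm z = - (kap * norm v)"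
        using power2_eq_iff by blast
      show ?thesis
      proof (cases "Im c * kap < 0")
        case True
        have "Im c * norm z \<noteq> kap * norm v"
        proof
          assume h: "Im c * norm z = kap * norm v"
          have "Im c * kap * norm z = kap * kap * norm v" using arg_cong[OF h, of "\<lambda>t. t * kap"] by (simp add: algebra_simps)
          moreover have "Im c * kap * norm z < 0" using True nz by (simp add: mult_neg_pos)
          moreover have "kap * kap * norm v \<ge> 0" using nv by simp
          ultimately show False by linarith
        qed
        thus ?thesis using o True by (simp add: s_def)
      next
        case False
        have "Im c * norm z = kap * norm v"
        proof (rule ccontr)
          assume h: "Im c * norm z \<noteq> kap * norm v"
          then have h2: "Im c * norm z = - (kap * norm v)" using o by simp
          have "Im c * kap * norm z = - (kap * kap * norm v)" using arg_cong[OF h2, of "\<lambda>t. t * kap"] by (simp add: algebra_simps)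
          moreover have "Im c * kap * norm z \<ge> 0" using False nz by simp
          ultimately have "kap * kap * norm v \<le> 0" by linarith
          have "kap * kap = 0"
          proof (rule ccontr)
            assume "kap * kap \<noteq> 0"
            then have "kap * kap > 0" by (simp add: zero_less_mult_iff linorder_neq_iff disj_commute)
            then have "kap * kap * norm v > 0" using nv by simp
            thus False using \<open>kap * kap * norm v \<le> 0\<close> by linarith
          qed
          hence "kap = 0" by simp
          thus False using h h2 by simp
        qed
        thus ?thesis using False by (simp add: s_def)
      qed
    qed
    define f where "f = (s * norm e / norm v) *\<^sub>R v"
    have "norm f = norm e"
      using nv ne s2 by (simp add: f_def abs_mult) (metis abs_mult_self_eq abs_of_nonneg mult.commute mult_1 abs_1 abs_minus_cancel s_def)
    moreover have "cinner f x = 0" using vz by (simp add: f_def x_def cinner_scaleR_left cinner_scaleR_right)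
    ultimately obtain P where P: "P \<in> unitary_orbit W" "\<And>\<alpha> \<beta>. \<alpha> *\<^sub>R x + \<beta> *\<^sub>R (lam *s x + f) \<in> P"
      using plane nx by blast
    have "z \<in> P" using P(2)[of "norm z / norm a" 0] zx by simp
    moreover have "c *s z + v \<in> P"
    proof -
      define \<beta> where "\<beta> = s * norm v / norm e"
      define \<alpha> where "\<alpha> = Re c * norm z / norm a - \<beta> * Re lam"
      have K2: "\<beta> * (s * norm e / norm v) = 1" using s2 ne nv by (simp add: \<beta>_def field_simps)
      have r: "\<alpha> * (norm a / norm z) + \<beta> * Re lam * (norm a / norm z) = Re c"
        using na nz by (simp add: \<alpha>_def field_simps)
      have "\<beta> * Im lam * (norm a / norm z) = s * kap * norm v / norm z"
        using na nz ne by (simp add: \<beta>_def kap_def field_simps)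
      also have "\<dots> = Im c" using sc nz by (simp add: field_simps)
      finally have i: "\<beta> * Im lam * (norm a / norm z) = Im c" .
      have K1: "complex_of_real \<alpha> * of_real (norm a / norm z) + of_real \<beta> * lam * of_real (norm a / norm z) = c"
        using r i by (simp add: complex_eq_iff)
      have "\<alpha> *\<^sub>R x + \<beta> *\<^sub>R (lam *s x + f) = c *s z + v"
      proof (subst vec_eq_iff, rule allI)
        fix i
        have "(\<alpha> *\<^sub>R x + \<beta> *\<^sub>R (lam *s x + f)) $ i
          = (complex_of_real \<alpha> * of_real (norm a / norm z) + of_real \<beta> * lam * of_real (norm a / norm z)) * z $ i
            + complex_of_real (\<beta> * (s * norm e / norm v)) * v $ i"
          by (simp add: x_def f_def scaleR_as_scale algebra_simps)
        also have "\<dots> = (c *s z + v) $ i" by (simp only: K1 K2) simp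
        finally show "(\<alpha> *\<^sub>R x + \<beta> *\<^sub>R (lam *s x + f)) $ i = (c *s z + v) $ i" .
      qed
      thus ?thesis using P(2) by metis
    qed
    ultimately show ?thesis using P(1) by (rule reach_single[rotated])
  qed
qed

lemma NP:
  assumes z0: "z \<noteq> 0"
    and h: "(Im (cinner y z))^2 = kap^2 * ((norm y)^2 * (norm z)^2 - (cmod (cinner y z))^2)"
  shows "reach (unitary_orbit W) z y"
proof -
  define c where "c = cinner y z / of_real ((norm z)^2)"
  note pr = proj[OF z0, of y, folded c_def]
  have nz: "(norm z)^2 > 0" using z0 by simp
  have "(Im c * norm z)^2 * (norm z)^2 = (Im c * (norm z)^2)^2"
    by (simp add: power2_eq_square)
  also have "\<dots> = kap^2 * ((norm (y - c *s z))^2 * (norm z)^2)"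
    using pr(4) h pr(3) by simp
  finally have "(Im c * norm z)^2 = (kap * norm (y - c *s z))^2"
    using nz by (simp add: power_mult_distrib)
  hence "\<bar>Im c\<bar> * norm z = \<bar>kap\<bar> * norm (y - c *s z)"
  proof -
    have "\<bar>Im c * norm z\<bar> = \<bar>kap * norm (y - c *s z)\<bar>"
      using \<open>(Im c * norm z)^2 = (kap * norm (y - c *s z))^2\<close>
      by (metis power2_abs power2_eq_iff_nonneg abs_ge_zero)
    thus ?thesis by (simp add: abs_mult)
  qed
  from N[OF z0 pr(1) this] show ?thesis using pr(2) by simp
qed


lemma PH:
  assumes z0: "z \<noteq> 0" and w0: "\<omega> \<noteq> 0"
  shows "reach (unitary_orbit W) z (\<omega> *s z)"
proof -
  obtain h where h: "h \<noteq> 0" "cinner h z = 0" using orth_exists[OF n3, of z z] by auto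
  have nz: "norm z > 0" using z0 by simp
  have nh: "norm h > 0" using h by simp
  show ?thesis
  proof (cases "Im \<omega> = 0")
    case True
    then show ?thesis using N[OF z0, of 0 \<omega>] by simp
  next
    case imw: False
    show ?thesis
    proof (cases "kap = 0")
      case True
      have "reach (unitary_orbit W) z h" using N[OF z0 h(2), of 0] True by simp
      moreover have "reach (unitary_orbit W) h (\<omega> *s z)"
      proof -
        have "cinner (\<omega> *s z) h = 0" using h(2) cinner_orth_sym[of h z] by (simp add: cinner_scale_left)
        thus ?thesis using N[OF h(1), of "\<omega> *s z" 0] True by simp
      qed
      ultimately show ?thesis using reach_trans h(1) by blast
    next
      case k0: False
      define c where "c = of_real (cmod \<omega>) + \<omega>"
      have Ic: "Im c = Im \<omega>" by (simp add: c_def)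
      define v where "v = (\<bar>Im c\<bar> * norm z / (\<bar>kap\<bar> * norm h)) *\<^sub>R h"
      have nv: "norm v = \<bar>Im c\<bar> * norm z / \<bar>kap\<bar>"
        using nh k0 by (simp add: v_def)
      have vz: "cinner v z = 0" using h by (simp add: v_def cinner_scaleR_left)
      define y where "y = c *s z + v"
      have r1: "reach (unitary_orbit W) z y"
        unfolding y_def by (rule N[OF z0 vz]) (use nv k0 in simp)
      define Lz where "Lz = (norm z)^2"
      have Lz: "Lz > 0" using nz by (simp add: Lz_def)
      have cyz: "cinner y z = c * of_real Lz"
        by (simp add: y_def cinner_add_left cinner_scale_left vz cinner_self Lz_def)
      have c0: "c \<noteq> 0" using imw Ic by auto
      have y0: "y \<noteq> 0" using cyz c0 Lz by auto
      have vz': "cinner z v = 0" using vz cinner_orth_sym by blast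
      have "cinner y y = c * cnj c * cinner z z + cinner v v"
        by (simp add: y_def cinner_add_left cinner_add_right cinner_scale_left cinner_scale_right vz vz'
            algebra_simps)
      also have "cinner z z = of_real Lz" by (simp add: cinner_self Lz_def)
      finally have "cinner y y = c * cnj c * of_real Lz + cinner v v" .
      hence "of_real ((norm y)^2) = (of_real ((cmod c)^2 * Lz + (norm v)^2) :: complex)"
        by (simp add: cinner_self csq[symmetric])
      hence ny: "(norm y)^2 = (cmod c)^2 * Lz + (norm v)^2" using of_real_eq_iff by blast
      have wc: "\<omega> * cnj c = of_real (cmod \<omega>) * c"
      proof -
        have "\<omega> * cnj \<omega> = of_real (cmod \<omega>) * of_real (cmod \<omega>)"
          by (simp add: csq[symmetric] power2_eq_square)
        thus ?thesis by (simp add: c_def algebra_simps)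
      qed
      have key: "cinner (\<omega> *s z) y = of_real (cmod \<omega> * Lz) * c"
      proof -
        have "cinner (\<omega> *s z) y = \<omega> * cnj (cinner y z)" by (simp add: cinner_scale_left cinner_cnj)
        also have "\<dots> = (\<omega> * cnj c) * of_real Lz" by (simp add: cyz)
        finally show ?thesis by (simp add: wc algebra_simps)
      qed
      have kv: "kap^2 * (norm v)^2 = (Im c)^2 * Lz"
        using nv k0 by (simp add: Lz_def power_divide power_mult_distrib)
      have "reach (unitary_orbit W) y (\<omega> *s z)"
      proof (rule NP[OF y0])
        have A: "Im (cinner (\<omega> *s z) y) = cmod \<omega> * Lz * Im c" by (simp add: key)
        have B: "cmod (cinner (\<omega> *s z) y) = cmod \<omega> * Lz * cmod c"
          using Lz by (simp add: key norm_mult)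
        have C: "(norm (\<omega> *s z))^2 = (cmod \<omega>)^2 * Lz" by (simp add: norm_scale Lz_def power_mult_distrib)
        have "kap\<^sup>2 * ((norm (\<omega> *s z))\<^sup>2 * (norm y)\<^sup>2 - (cmod (cinner (\<omega> *s z) y))\<^sup>2)
            = (cmod \<omega>)^2 * Lz * (kap^2 * (norm v)^2)"
          unfolding B C ny by (simp add: power2_eq_square algebra_simps)
        also have "\<dots> = (Im (cinner (\<omega> *s z) y))^2"
          unfolding kv A by (simp add: power2_eq_square algebra_simps)
        finally show "(Im (cinner (\<omega> *s z) y))\<^sup>2 = kap\<^sup>2 * ((norm (\<omega> *s z))\<^sup>2 * (norm y)\<^sup>2 - (cmod (cinner (\<omega> *s z) y))\<^sup>2)"
          by simp
      qed
      thus ?thesis using r1 y0 reach_trans by blast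
    qed
  qed
qed


lemma NG:
  assumes z0: "z \<noteq> 0" and vz: "cinner v z = 0" and cond: "kap^2 * (norm v)^2 \<le> (cmod c)^2 * (norm z)^2"
  shows "reach (unitary_orbit W) z (c *s z + v)"
proof (cases "c = 0")
  case True
  then have "kap^2 * (norm v)^2 \<le> 0" using cond by simp
  then have "(kap * norm v)^2 \<le> 0" by (simp add: power_mult_distrib)
  then have "(kap * norm v)^2 = 0" using zero_le_power2[of "kap * norm v"] by linarith
  then have "kap * norm v = 0" by simp
  then show ?thesis using N[OF z0 vz, of c] True by (simp add: abs_mult[symmetric])
next
  case c0: False
  have nz: "norm z > 0" using z0 by simp
  define m where "m = \<bar>kap\<bar> * norm v / norm z"
  have m0: "m \<ge> 0" using nz by (simp add: m_def)
  have "m^2 = kap^2 * (norm v)^2 / (norm z)^2" by (simp add: m_def power_divide power_mult_distrib)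
  also have "\<dots> \<le> (cmod c)^2" using cond nz by (simp add: pos_divide_le_eq)
  finally have "m^2 \<le> (cmod c)^2" .
  then have mc: "m \<le> cmod c" using m0 by (simp add: abs_le_square_iff)
  define q where "q = Complex (sqrt ((cmod c)^2 - m^2)) m"
  have "(cmod q)^2 = (cmod c)^2"
    using \<open>m^2 \<le> (cmod c)^2\<close> by (simp add: q_def cmod_power2)
  then have qc: "cmod q = cmod c" by (simp add: power2_eq_iff_nonneg)
  then have q0: "q \<noteq> 0" using c0 by auto
  define \<omega> where "\<omega> = c / q"
  have w1: "cmod \<omega> = 1" using qc c0 by (simp add: \<omega>_def norm_divide)
  have w0: "\<omega> \<noteq> 0" using w1 by auto
  have r1: "reach (unitary_orbit W) z (\<omega> *s z)" by (rule PH[OF z0 w0])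
  have "norm (\<omega> *s z) = norm z" using w1 by (simp add: norm_scale)
  hence wz0: "\<omega> *s z \<noteq> 0" using z0 by (metis norm_eq_zero)
  have vwz: "cinner v (\<omega> *s z) = 0" using vz by (simp add: cinner_scale_right)
  have "\<bar>Im q\<bar> * norm (\<omega> *s z) = \<bar>kap\<bar> * norm v"
    using m0 nz w1 by (simp add: q_def norm_scale m_def)
  from N[OF wz0 vwz this] have "reach (unitary_orbit W) (\<omega> *s z) (q *s (\<omega> *s z) + v)" .
  moreover have "q *s (\<omega> *s z) = c *s z" using q0 by (simp add: vector_smult_assoc \<omega>_def)
  ultimately show ?thesis using r1 wz0 reach_trans by fastforce
qed

lemma ANG:
  assumes z0: "z \<noteq> 0"
    and h: "kap^2 * ((norm y)^2 * (norm z)^2 - (cmod (cinner y z))^2) \<le> (cmod (cinner y z))^2"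
  shows "reach (unitary_orbit W) z y"
proof -
  define c where "c = cinner y z / of_real ((norm z)^2)"
  note pr = proj[OF z0, of y, folded c_def]
  have nz: "(norm z)^2 > 0" using z0 by simp
  have "(kap^2 * (norm (y - c *s z))^2) * (norm z)^2 \<le> ((cmod c)^2 * (norm z)^2) * (norm z)^2"
  proof -
    have "(kap^2 * (norm (y - c *s z))^2) * (norm z)^2 = kap^2 * ((norm (y - c *s z))^2 * (norm z)^2)"
      by simp
    also have "\<dots> \<le> (cmod (cinner y z))^2" using h pr(3) by simp
    also have "\<dots> = (cmod c * (norm z)^2)^2" using pr(5) by simp
    finally show ?thesis by (simp add: power2_eq_square algebra_simps)
  qed
  hence "kap^2 * (norm (y - c *s z))^2 \<le> (cmod c)^2 * (norm z)^2"
    using nz by (simp add: mult_le_cancel_right)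
  from NG[OF z0 pr(1) this] show ?thesis using pr(2) by simp
qed


lemma cmod_cs: "cmod (cinner z z) = (norm z)^2"
  by (simp only: cinner_self norm_of_real) simp

lemma C1:
  assumes x0: "x \<noteq> 0" and g0: "g \<noteq> 0" and gx: "cinner g x = 0"
  shows "reach (unitary_orbit W) x g"
proof -
  define Lx where "Lx = (norm x)^2"
  define Lg where "Lg = (norm g)^2"
  have Lx: "Lx > 0" using x0 by (simp add: Lx_def)
  have Lg: "Lg > 0" using g0 by (simp add: Lg_def)
  define K where "K = \<bar>kap\<bar> + 1"
  have K: "K > 0" "kap^2 \<le> K^2" by (simp_all add: K_def abs_le_square_iff[symmetric])
  define \<epsilon> where "\<epsilon> = (norm x / norm g) / K"
  have eps0: "\<epsilon> > 0" using x0 g0 K by (simp add: \<epsilon>_def)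
  have eps: "\<epsilon>^2 * Lg = Lx / K^2"
    using g0 K by (simp add: \<epsilon>_def Lx_def Lg_def power_divide power_mult_distrib field_simps)
  define y where "y = (\<lambda>t::real. x + t *\<^sub>R g)"
  have xg: "cinner x g = 0" using gx cinner_orth_sym by blast
  have gram: "cinner (y t) (y s) = of_real (Lx + t * s * Lg)" for t s
    by (simp add: y_def cinner_add_left cinner_add_right cinner_scaleR_left cinner_scaleR_right gx xg
        cinner_self Lx_def Lg_def algebra_simps)
  have ny: "(norm (y t))^2 = Lx + t^2 * Lg" for t
  proof -
    have "of_real ((norm (y t))^2) = (of_real (Lx + t^2 * Lg) :: complex)"
      using gram[of t t] by (simp add: cinner_self power2_eq_square del: of_real_power)
    thus ?thesis using of_real_eq_iff by blast
  qed
  have y0: "y t \<noteq> 0" for t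
  proof -
    have "(norm (y t))^2 > 0" using ny[of t] Lx Lg by (simp add: add_pos_nonneg)
    thus ?thesis by auto
  qed
  have step: "reach (unitary_orbit W) (y s) (y (s + \<epsilon>))" if s0: "s \<ge> 0" for s
  proof (rule ANG[OF y0])
    define t where "t = s + \<epsilon>"
    have t0: "t \<ge> 0" using s0 eps0 by (simp add: t_def)
    have cm: "cmod (cinner (y t) (y s)) = Lx + t * s * Lg"
      using Lx Lg s0 t0 unfolding gram norm_of_real by simp
    have "(norm (y t))^2 * (norm (y s))^2 - (cmod (cinner (y t) (y s)))^2 = Lx * Lg * (t - s)^2"
      unfolding ny cm by (simp add: power2_eq_square algebra_simps)
    also have "\<dots> = Lx * (\<epsilon>^2 * Lg)" by (simp add: t_def algebra_simps)
    also have "\<dots> = Lx^2 / K^2" unfolding eps by (simp add: power2_eq_square)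
    finally have D: "(norm (y t))^2 * (norm (y s))^2 - (cmod (cinner (y t) (y s)))^2 = Lx^2 / K^2" .
    have "kap^2 * (Lx^2 / K^2) \<le> Lx^2"
      using K Lx by (simp add: pos_divide_le_eq mult.commute mult_left_mono)
    also have "Lx^2 \<le> (Lx + t * s * Lg)^2"
      using Lx Lg s0 t0 by (intro power_mono) auto
    finally show "kap^2 * ((norm (y (s + \<epsilon>)))^2 * (norm (y s))^2 - (cmod (cinner (y (s + \<epsilon>)) (y s)))^2)
        \<le> (cmod (cinner (y (s + \<epsilon>)) (y s)))^2"
      using D cm by (simp add: t_def)
  qed
  have path: "reach (unitary_orbit W) x (y (real j * \<epsilon>))" for j
  proof (induction j)
    case 0
    have "reach (unitary_orbit W) x x"
      by (rule ANG[OF x0]) (simp add: cmod_cs)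
    then show ?case by (simp add: y_def)
  next
    case (Suc j)
    have "reach (unitary_orbit W) (y (real j * \<epsilon>)) (y (real j * \<epsilon> + \<epsilon>))"
      using step eps0 by simp
    then have "reach (unitary_orbit W) x (y (real j * \<epsilon> + \<epsilon>))" using Suc.IH y0 reach_trans by blast
    moreover have "real (Suc j) * \<epsilon> = real j * \<epsilon> + \<epsilon>" by (simp add: distrib_right)
    ultimately show ?case by simp
  qed
  define m where "m = nat \<lceil>\<bar>kap\<bar> * K\<rceil>"
  have mK: "real m \<ge> \<bar>kap\<bar> * K" unfolding m_def by linarith
  define t where "t = real m * \<epsilon>"
  have t0: "t \<ge> 0" using eps0 by (simp add: t_def)
  have final: "reach (unitary_orbit W) (y t) g"
  proof (rule ANG[OF y0])
    have cg: "cinner g (y t) = of_real (t * Lg)"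
      by (simp add: y_def cinner_add_right cinner_scaleR_right gx cinner_self Lg_def)
    have cm: "cmod (cinner g (y t)) = t * Lg" using t0 Lg unfolding cg norm_of_real by simp
    have "(norm g)^2 * (norm (y t))^2 - (cmod (cinner g (y t)))^2 = Lg * Lx"
      unfolding ny cm Lg_def[symmetric] by (simp add: power2_eq_square algebra_simps)
    moreover have "kap^2 * (Lg * Lx) \<le> (t * Lg)^2"
    proof -
      have "(\<bar>kap\<bar> * K)^2 \<le> (real m)^2"
        using mK K by (intro power_mono) auto
      hence "kap^2 * K^2 \<le> (real m)^2" by (simp add: power_mult_distrib)
      hence "kap^2 * Lx \<le> (real m)^2 * (Lx / K^2)"
        using K Lx by (simp add: field_simps)
      also have "\<dots> = t^2 * Lg" by (simp add: t_def power_mult_distrib eps[symmetric] algebra_simps)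
      finally have "kap^2 * Lx \<le> t^2 * Lg" .
      hence "(kap^2 * Lx) * Lg \<le> (t^2 * Lg) * Lg" using Lg by (simp add: mult_right_mono)
      thus ?thesis by (simp add: power2_eq_square algebra_simps)
    qed
    ultimately show "kap^2 * ((norm g)^2 * (norm (y t))^2 - (cmod (cinner g (y t)))^2) \<le> (cmod (cinner g (y t)))^2"
      using cm by simp
  qed
  show ?thesis using reach_trans[OF path[of m] final[unfolded t_def] y0] .
qed

theorem all_reach: "reach (unitary_orbit W) x y"
proof -
  have self: "reach (unitary_orbit W) z z" if "z \<noteq> 0" for z
    by (rule ANG[OF that]) (simp add: cmod_cs)
  have zero: "reach (unitary_orbit W) 0 z" for z
  proof (cases "z = 0")
    case True
    have "W \<in> unitary_orbit W"
      unfolding unitary_orbit_def using unitary_one by (intro CollectI exI[of _ "mat 1"]) simp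
    then show ?thesis using True orbit_zero by (intro reach_single) auto
  next
    case False
    obtain Ws where Ws: "Ws \<noteq> []" "set Ws \<subseteq> unitary_orbit W" "z \<in> last Ws"
      using self[OF False] unfolding reach_def by blast
    have "last Ws \<in> unitary_orbit W" using Ws by auto
    then show ?thesis using Ws(3) orbit_zero by (intro reach_single) auto
  qed
  show ?thesis
  proof (cases "x = 0 \<or> y = 0")
    case True
    then show ?thesis using zero reach_sym by blast
  next
    case False
    obtain f where f: "f \<noteq> 0" "cinner f x = 0" "cinner f y = 0" using orth_exists[OF n3, of x y] by auto
    have "reach (unitary_orbit W) x f" using C1 False f by auto
    moreover have "reach (unitary_orbit W) f y" using C1[of y f] False f reach_sym by auto
    ultimately show ?thesis using f reach_trans by blast
  qed
qed

end

lemma rep: "c *s (a::complex^'n) = Re c *\<^sub>R a + Im c *\<^sub>R (\<i> *s a)"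
proof (subst vec_eq_iff, rule allI)
  fix i
  have "c = complex_of_real (Re c) + \<i> * complex_of_real (Im c)" by (simp add: complex_eq_iff)
  hence "c * a$i = complex_of_real (Re c) * a$i + complex_of_real (Im c) * (\<i> * a$i)"
    by (metis (no_types, lifting) distrib_right mult.assoc mult.commute)
  thus "(c *s a) $ i = (Re c *\<^sub>R a + Im c *\<^sub>R (\<i> *s a)) $ i"
    by (simp only: scaleR_as_scale vector_smult_component vector_add_component)
qed
theorem proposition11p7:
  fixes W :: "(complex ^ 'n) set"
  assumes "CARD('n) \<ge> 3"
    and "W \<in> real_grassmannian2"
    and "\<not> complex_line W"
  shows "transitivity_property (unitary_orbit W)"
proof -
  have sub: "subspace W" and dW: "dim W = 2" using assms(2) by (auto simp: real_grassmannian2_def)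
  have "\<not> W \<subseteq> {0}" using dW dim_eq_0[of W] by auto
  then obtain a where aW: "a \<in> W" and a0: "a \<noteq> 0" by auto
  have rep: "c *s a = Re c *\<^sub>R a + Im c *\<^sub>R (\<i> *s a)" for c
    by (rule rep)
  have "\<exists>b\<in>W. \<forall>c. b \<noteq> c *s a"
  proof (rule ccontr)
    assume "\<not> ?thesis"
    then have all: "\<forall>b\<in>W. \<exists>c. b = c *s a" by auto
    define L where "L = span {a, \<i> *s a}"
    have inL: "c *s a \<in> L" for c
    proof -
      have "Re c *\<^sub>R a + Im c *\<^sub>R (\<i> *s a) \<in> L"
        unfolding L_def by (intro span_add span_scale span_base) auto
      thus ?thesis using rep[of c] by simp
    qed
    have WL: "W \<subseteq> L" using all inL by auto
    have "dim L \<le> card {a, \<i> *s a}" unfolding L_def by (rule dim_le_card) auto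
    also have "\<dots> \<le> 2" by (simp add: card_insert_if)
    finally have "dim L \<le> dim W" using dW by simp
    then have "W = L" using subspace_dim_equal[OF sub _ WL] by (simp add: L_def)
    then have "W = {c *s a | c. True}" using all inL by auto
    then show False using assms(3) a0 unfolding complex_line_def by blast
  qed
  then obtain b where bW: "b \<in> W" and bn: "\<forall>c. b \<noteq> c *s a" by blast
  define lam where "lam = cinner b a / cinner a a"
  define e where "e = b - lam *s a"
  have caa: "cinner a a \<noteq> 0" using a0 by (simp add: cinner_self_eq0)
  have ae: "cinner e a = 0" using caa by (simp add: e_def lam_def cinner_diff_left cinner_scale_left)
  have e0: "e \<noteq> 0" using bn by (auto simp: e_def)
  have bW': "lam *s a + e \<in> W" using bW by (simp add: e_def)
  interpret setupW W a e lam
    using assms(1) sub aW bW' a0 e0 ae by unfold_locales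
  show ?thesis unfolding tp_reach using all_reach by blast
qed



end
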